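(* For every $n\ge0$ and every $\phi\ge0$, $$v_\infty(\phi)\le v_n(\phi)\le v_\infty(\phi)+\frac1c\Big(\frac{\lambda_0}{\lambda+\lambda_0}\Big)^n.$$ In particular $v_n\to v_\infty$ uniformly on $\mathbb R_+$.
   Context: Fix constants $\lambda,\lambda_0,\lambda_1\in(0,\infty)$, $\mu\in\mathbb R\setminus\{0\}$, $c>0$. Let $(E,\mathcal E)$ be a measurable space with probability measures $\nu_0,\nu_1$, $\nu_1\ll\nu_0$, $f:=d\nu_1/d\nu_0$. On $(\Omega,\mathcal F,\mathbb P_0)$ let $X$ be a standard Wiener process and, independent of it, $(T_n,Z_n)_{n\ge1}$ a marked point process whose arrivals form a Poisson process of rate $\lambda_0$ and whose marks are i.i.d. $\nu_0$, independent of the arrivals. $\mathbb F^X$ is the filtration generated by $X$. Let $L_t=\exp\{\mu X_t-(\mu^2/2+\lambda_1-\lambda_0)t\}\prod_{n:\,T_n\le t}\frac{\lambda_1}{\lambda_0}f(Z_n)$; for $\phi\ge0$, $\Phi_t=\phi e^{\lambda t}L_t+\int_0^t\lambda e^{\lambda(t-s)}\frac{L_t}{L_s}ds$, with $\mathbb E_0^\phi$ the expectation when $\Phi_0=\phi$. Let $g(\phi)=\phi-\lambda/c$. For bounded Borel $w$, $(Jw)(\phi)=\inf_{\tau}\mathbb E_0^\phi\big[\int_0^{\tau\wedge T_1}e^{-\lambda t}g(\Phi_t)dt+\mathbf 1_{\{\tau\ge T_1\}}e^{-\lambda T_1}w(\Phi_{T_1})\big]$, infimum over $\mathbb F^X$-stopping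 times $\tau$. Define $v_0\equiv0$, $v_{n+1}=Jv_n$ for $n\ge0$; the sequence is pointwise nonincreasing and $v_\infty$ denotes its pointwise limit. *)

theory Defs
  imports "HOL-Probability.Probability"
begin

definition indep_rv :: "'w measure \<Rightarrow> 'a measure \<Rightarrow> ('w \<Rightarrow> 'a) \<Rightarrow> 'b measure \<Rightarrow> ('w \<Rightarrow> 'b) \<Rightarrow> bool" where
  "indep_rv M Ma A Mb B \<longleftrightarrow>
     A \<in> measurable M Ma \<and> B \<in> measurable M Mb \<and>
     prob_space.indep_set M (sets (vimage_algebra (space M) A Ma)) (sets (vimage_algebra (space M) B Mb))"

definition wiener_process :: "'w measure \<Rightarrow> (real \<Rightarrow> 'w \<Rightarrow> real) \<Rightarrow> bool" where
  "wiener_process M X \<longleftrightarrow>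
     prob_space M \<and>
     (\<forall>t\<ge>0. X t \<in> borel_measurable M) \<and>
     (\<forall>\<omega>\<in>space M. X 0 \<omega> = 0 \<and> continuous_on {0..} (\<lambda>t. X t \<omega>)) \<and>
     (\<forall>s t. 0 \<le> s \<and> s < t \<longrightarrow>
        distributed M lborel (\<lambda>\<omega>. X t \<omega> - X s \<omega>)
          (\<lambda>x. ennreal (normal_density 0 (sqrt (t - s)) x))) \<and>
     (\<forall>(ts :: nat \<Rightarrow> real) n. 0 \<le> ts 0 \<and> (\<forall>i<n. ts i < ts (Suc i)) \<longrightarrow>
        prob_space.indep_vars M (\<lambda>_. borel) (\<lambda>i \<omega>. X (ts (Suc i)) \<omega> - X (ts i) \<omega>) {..<n})"

text \<open>Z 0 is unused.\<close>
definition marked_poisson ::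
  "'w measure \<Rightarrow> real \<Rightarrow> 'e measure \<Rightarrow> (nat \<Rightarrow> 'w \<Rightarrow> real) \<Rightarrow> (nat \<Rightarrow> 'w \<Rightarrow> 'e) \<Rightarrow> bool" where
  "marked_poisson M l \<nu> T Z \<longleftrightarrow>
     (\<forall>\<omega>\<in>space M. T 0 \<omega> = 0) \<and>
     (\<forall>n. distributed M lborel (\<lambda>\<omega>. T (Suc n) \<omega> - T n \<omega>)
            (\<lambda>x. ennreal (exponential_density l x))) \<and>
     prob_space.indep_vars M (\<lambda>_. borel) (\<lambda>n \<omega>. T (Suc n) \<omega> - T n \<omega>) UNIV \<and>
     (\<forall>n\<ge>1. Z n \<in> measurable M \<nu> \<and> distr M \<nu> (Z n) = \<nu>) \<and>
     prob_space.indep_vars M (\<lambda>_. \<nu>) Z {1..} \<and>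
     indep_rv M
        (PiM UNIV (\<lambda>_. borel)) (\<lambda>\<omega> n. T (Suc n) \<omega> - T n \<omega>)
        (PiM {1..} (\<lambda>_. \<nu>)) (\<lambda>\<omega>. restrict (\<lambda>n. Z n \<omega>) {1..})"

definition nat_filtration :: "'w measure \<Rightarrow> (real \<Rightarrow> 'w \<Rightarrow> real) \<Rightarrow> real \<Rightarrow> 'w measure" where
  "nat_filtration M X t =
     sigma (space M) {X s -` B \<inter> space M | s B. 0 \<le> s \<and> s \<le> t \<and> B \<in> sets borel}"

definition FX_stopping_time :: "'w measure \<Rightarrow> (real \<Rightarrow> 'w \<Rightarrow> real) \<Rightarrow> ('w \<Rightarrow> ereal) \<Rightarrow> bool" where
  "FX_stopping_time M X \<tau> \<longleftrightarrow>
     (\<forall>\<omega>\<in>space M. 0 \<le> \<tau> \<omega>) \<and>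
     (\<forall>t\<ge>0. {\<omega>\<in>space M. \<tau> \<omega> \<le> ereal t} \<in> sets (nat_filtration M X t))"

definition Lproc ::
  "real \<Rightarrow> real \<Rightarrow> real \<Rightarrow> ('e \<Rightarrow> real) \<Rightarrow> (real \<Rightarrow> 'w \<Rightarrow> real) \<Rightarrow> (nat \<Rightarrow> 'w \<Rightarrow> real)
    \<Rightarrow> (nat \<Rightarrow> 'w \<Rightarrow> 'e) \<Rightarrow> real \<Rightarrow> 'w \<Rightarrow> real" where
  "Lproc \<mu> l0 l1 f X T Z t \<omega> =
     exp (\<mu> * X t \<omega> - (\<mu>\<^sup>2 / 2 + l1 - l0) * t) *
     (\<Prod>n\<in>{n. 1 \<le> n \<and> T n \<omega> \<le> t}. l1 / l0 * f (Z n \<omega>))"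

text \<open>The ratio L_t / L_s (s \<le> t), written out as the multiplicative increment of L on (s,t].\<close>
definition Lratio ::
  "real \<Rightarrow> real \<Rightarrow> real \<Rightarrow> ('e \<Rightarrow> real) \<Rightarrow> (real \<Rightarrow> 'w \<Rightarrow> real) \<Rightarrow> (nat \<Rightarrow> 'w \<Rightarrow> real)
    \<Rightarrow> (nat \<Rightarrow> 'w \<Rightarrow> 'e) \<Rightarrow> real \<Rightarrow> real \<Rightarrow> 'w \<Rightarrow> real" where
  "Lratio \<mu> l0 l1 f X T Z s t \<omega> =
     exp (\<mu> * (X t \<omega> - X s \<omega>) - (\<mu>\<^sup>2 / 2 + l1 - l0) * (t - s)) *
     (\<Prod>n\<in>{n. 1 \<le> n \<and> s < T n \<omega> \<and> T n \<omega> \<le> t}. l1 / l0 * f (Z n \<omega>))"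

definition Phi ::
  "real \<Rightarrow> real \<Rightarrow> real \<Rightarrow> real \<Rightarrow> ('e \<Rightarrow> real) \<Rightarrow> (real \<Rightarrow> 'w \<Rightarrow> real) \<Rightarrow> (nat \<Rightarrow> 'w \<Rightarrow> real)
    \<Rightarrow> (nat \<Rightarrow> 'w \<Rightarrow> 'e) \<Rightarrow> real \<Rightarrow> real \<Rightarrow> 'w \<Rightarrow> real" where
  "Phi lam \<mu> l0 l1 f X T Z \<phi> t \<omega> =
     \<phi> * exp (lam * t) * Lproc \<mu> l0 l1 f X T Z t \<omega> +
     (LINT s:{0..t}|lborel. lam * exp (lam * (t - s)) * Lratio \<mu> l0 l1 f X T Z s t \<omega>)"

text \<open>Extended-real expectation E[Y] = E[Y^+] - E[Y^-] (well defined whenever E[Y^-] < \<infinity>).\<close>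
definition ext_expectation :: "'w measure \<Rightarrow> ('w \<Rightarrow> real) \<Rightarrow> ereal" where
  "ext_expectation M Y =
     enn2ereal (\<integral>\<^sup>+\<omega>. ennreal (Y \<omega>) \<partial>M) - enn2ereal (\<integral>\<^sup>+\<omega>. ennreal (- Y \<omega>) \<partial>M)"

definition Jop ::
  "'w measure \<Rightarrow> real \<Rightarrow> real \<Rightarrow> real \<Rightarrow> real \<Rightarrow> real \<Rightarrow> ('e \<Rightarrow> real) \<Rightarrow> (real \<Rightarrow> 'w \<Rightarrow> real)
    \<Rightarrow> (nat \<Rightarrow> 'w \<Rightarrow> real) \<Rightarrow> (nat \<Rightarrow> 'w \<Rightarrow> 'e) \<Rightarrow> (real \<Rightarrow> real) \<Rightarrow> real \<Rightarrow> real" where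
  "Jop M lam \<mu> l0 l1 c f X T Z w \<phi> =
     real_of_ereal (INF \<tau>\<in>{\<tau>. FX_stopping_time M X \<tau>}.
       ext_expectation M (\<lambda>\<omega>.
         (LINT t:{0..real_of_ereal (min (\<tau> \<omega>) (ereal (T 1 \<omega>)))}|lborel.
            exp (- lam * t) * (Phi lam \<mu> l0 l1 f X T Z \<phi> t \<omega> - lam / c)) +
         (if ereal (T 1 \<omega>) \<le> \<tau> \<omega>
          then exp (- lam * T 1 \<omega>) * w (Phi lam \<mu> l0 l1 f X T Z \<phi> (T 1 \<omega>) \<omega>)
          else 0)))"

end

theory Submission
  imports Defs
begin


lemma prod_dyn_meas:
  fixes g :: "nat \<Rightarrow> 'a \<Rightarrow> real"
  assumes P[measurable]: "\<And>n. Measurable.pred N (P n)"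
    and g: "\<And>n. n \<ge> 1 \<Longrightarrow> g n \<in> borel_measurable N"
  shows "(\<lambda>x. \<Prod>n\<in>{n. 1 \<le> n \<and> P n x}. g n x) \<in> borel_measurable N"
proof -
  define h where "h K x = (\<Prod>n\<in>{1..<K}. if P n x then g n x else 1)" for K x
  define L where "L x = (LEAST K. \<forall>n\<ge>K. 1 \<le> n \<longrightarrow> \<not> P n x)" for x
  have fin: "finite {n. 1 \<le> n \<and> P n x} \<longleftrightarrow> (\<exists>K. \<forall>n\<ge>K. 1 \<le> n \<longrightarrow> \<not> P n x)" for x
  proof
    assume "finite {n. 1 \<le> n \<and> P n x}"
    then obtain K where "\<forall>n\<in>{n. 1 \<le> n \<and> P n x}. n < K"
      using finite_nat_set_iff_bounded by blast
    then show "\<exists>K. \<forall>n\<ge>K. 1 \<le> n \<longrightarrow> \<not> P n x"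
      by (metis (mono_tags, lifting) leD mem_Collect_eq)
  next
    assume "\<exists>K. \<forall>n\<ge>K. 1 \<le> n \<longrightarrow> \<not> P n x"
    then obtain K where "\<forall>n\<ge>K. 1 \<le> n \<longrightarrow> \<not> P n x" by blast
    then have "{n. 1 \<le> n \<and> P n x} \<subseteq> {..<K}" by (auto simp: not_less[symmetric])
    then show "finite {n. 1 \<le> n \<and> P n x}" using finite_subset by blast
  qed
  have eq: "(\<Prod>n\<in>{n. 1 \<le> n \<and> P n x}. g n x) =
      (if \<exists>K. \<forall>n\<ge>K. 1 \<le> n \<longrightarrow> \<not> P n x then h (L x) x else 1)" for x
  proof (cases "\<exists>K. \<forall>n\<ge>K. 1 \<le> n \<longrightarrow> \<not> P n x")
    case True
    then have LL: "\<forall>n\<ge>L x. 1 \<le> n \<longrightarrow> \<not> P n x"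
      unfolding L_def by (rule LeastI_ex)
    have "{n. 1 \<le> n \<and> P n x} = {n\<in>{1..<L x}. P n x}"
      using LL by (auto simp: not_less[symmetric])
    then have "(\<Prod>n\<in>{n. 1 \<le> n \<and> P n x}. g n x) = h (L x) x"
      unfolding h_def by (simp only: prod.inter_filter[OF finite_atLeastLessThan])
    then show ?thesis using True by simp
  next
    case False
    then have "infinite {n. 1 \<le> n \<and> P n x}" using fin[of x] by blast
    then show ?thesis by (subst if_not_P[OF False]) simp
  qed
  have hm: "(\<lambda>x. h K x) \<in> borel_measurable N" for K
    unfolding h_def by (intro borel_measurable_prod) (auto intro!: measurable_If g)
  have Lm: "L \<in> measurable N (count_space UNIV)" unfolding L_def by measurable
  have "(\<lambda>x. h (L x) x) \<in> borel_measurable N"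
    by (rule measurable_compose_countable'[OF hm Lm]) auto
  then have "(\<lambda>x. if \<exists>K. \<forall>n\<ge>K. 1 \<le> n \<longrightarrow> \<not> P n x then h (L x) x else 1) \<in> borel_measurable N"
    by measurable
  then show ?thesis by (simp only: eq[symmetric])
qed

context prob_space
begin

lemma ext_exp_cong: "AE x in M. Y1 x = Y2 x \<Longrightarrow> ext_expectation M Y1 = ext_expectation M Y2"
proof -
  assume a: "AE x in M. Y1 x = Y2 x"
  have "(\<integral>\<^sup>+x. ennreal (Y1 x) \<partial>M) = (\<integral>\<^sup>+x. ennreal (Y2 x) \<partial>M)"
    by (rule nn_integral_cong_AE) (rule AE_mp[OF a], simp)
  moreover have "(\<integral>\<^sup>+x. ennreal (- Y1 x) \<partial>M) = (\<integral>\<^sup>+x. ennreal (- Y2 x) \<partial>M)"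
    by (rule nn_integral_cong_AE) (rule AE_mp[OF a], simp)
  ultimately show ?thesis unfolding ext_expectation_def by simp
qed

lemma neg_part_bound:
  assumes "AE x in M. - K \<le> Y x" "0 \<le> K"
  shows "(\<integral>\<^sup>+x. ennreal (- Y x) \<partial>M) \<le> ennreal K"
proof -
  have "(\<integral>\<^sup>+x. ennreal (- Y x) \<partial>M) \<le> (\<integral>\<^sup>+x. ennreal K \<partial>M)"
    by (rule nn_integral_mono_AE) (rule AE_mp[OF assms(1)], auto intro!: ennreal_leI)
  also have "\<dots> = ennreal K" by (simp add: emeasure_space_1)
  finally show ?thesis .
qed

lemma ext_exp_lower:
  assumes "AE x in M. - K \<le> Y x" "0 \<le> K"
  shows "- ereal K \<le> ext_expectation M Y"
proof -
  have n: "(\<integral>\<^sup>+x. ennreal (- Y x) \<partial>M) \<le> ennreal K" by (rule neg_part_bound[OF assms])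
  have "ereal 0 - ereal K \<le> ext_expectation M Y"
    unfolding ext_expectation_def
  proof (rule ereal_minus_mono)
    show "ereal 0 \<le> enn2ereal (\<integral>\<^sup>+x. ennreal (Y x) \<partial>M)" using enn2ereal_nonneg zero_ereal_def by metis
    have "enn2ereal (\<integral>\<^sup>+x. ennreal (- Y x) \<partial>M) \<le> enn2ereal (ennreal K)"
      using n by (simp add: less_eq_ennreal.rep_eq)
    then show "enn2ereal (\<integral>\<^sup>+x. ennreal (- Y x) \<partial>M) \<le> ereal K" using assms(2) by simp
  qed
  then show ?thesis by simp
qed

lemma ext_exp_mono:
  assumes "AE x in M. Y1 x \<le> Y2 x"
  shows "ext_expectation M Y1 \<le> ext_expectation M Y2"
proof -
  have p: "(\<integral>\<^sup>+x. ennreal (Y1 x) \<partial>M) \<le> (\<integral>\<^sup>+x. ennreal (Y2 x) \<partial>M)"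
    by (rule nn_integral_mono_AE) (rule AE_mp[OF assms(1)], auto intro!: ennreal_leI)
  have n: "(\<integral>\<^sup>+x. ennreal (- Y2 x) \<partial>M) \<le> (\<integral>\<^sup>+x. ennreal (- Y1 x) \<partial>M)"
    by (rule nn_integral_mono_AE) (rule AE_mp[OF assms(1)], auto intro!: ennreal_leI)
  show ?thesis unfolding ext_expectation_def
    by (intro ereal_minus_mono) (use p n in \<open>simp_all add: less_eq_ennreal.rep_eq\<close>)
qed

lemma ext_exp_integrable:
  assumes "integrable M Y" shows "ext_expectation M Y = ereal (integral\<^sup>L M Y)"
proof -
  from integrableE[OF assms] obtain r q where rq: "0 \<le> r" "0 \<le> q"
    "(\<integral>\<^sup>+x. ennreal (Y x)\<partial>M) = ennreal r" "(\<integral>\<^sup>+x. ennreal (-Y x)\<partial>M) = ennreal q"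
    "integral\<^sup>L M Y = r - q" by metis
  show ?thesis unfolding ext_expectation_def rq using rq(1,2) by simp
qed

lemma ext_exp_compare:
  assumes [measurable]: "Y1 \<in> borel_measurable M" "Y2 \<in> borel_measurable M" "h \<in> borel_measurable M"
    and le: "AE x in M. Y1 x \<le> Y2 x + h x" and h0: "AE x in M. 0 \<le> h x" and hi: "integrable M h"
    and lb1: "AE x in M. - K \<le> Y1 x" and lb2: "AE x in M. - K \<le> Y2 x" and K: "0 \<le> K"
  shows "ext_expectation M Y1 \<le> ext_expectation M Y2 + ereal (integral\<^sup>L M h)"
proof (cases "(\<integral>\<^sup>+x. ennreal (Y2 x) \<partial>M) = \<infinity>")
  case True
  have n: "(\<integral>\<^sup>+x. ennreal (- Y2 x) \<partial>M) \<le> ennreal K" by (rule neg_part_bound[OF lb2 K])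
  then have "enn2ereal (\<integral>\<^sup>+x. ennreal (- Y2 x) \<partial>M) \<le> enn2ereal (ennreal K)"
    by (simp add: less_eq_ennreal.rep_eq)
  then have "enn2ereal (\<integral>\<^sup>+x. ennreal (- Y2 x) \<partial>M) \<le> ereal K" using K by simp
  then have "ext_expectation M Y2 = \<infinity>" unfolding ext_expectation_def True
    by (cases "enn2ereal (\<integral>\<^sup>+x. ennreal (- Y2 x) \<partial>M)") (auto simp: infinity_ennreal_def)
  then show ?thesis by simp
next
  case False
  have n: "(\<integral>\<^sup>+x. ennreal (- Y2 x) \<partial>M) \<le> ennreal K" by (rule neg_part_bound[OF lb2 K])
  then have "(\<integral>\<^sup>+x. ennreal (- Y2 x) \<partial>M) \<noteq> \<infinity>"
    using ennreal_neq_top top.extremum_uniqueI by (metis infinity_ennreal_def)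
  then have i2: "integrable M Y2" using False by (simp add: real_integrable_def)
  have "integrable M (\<lambda>x. \<bar>Y2 x\<bar> + h x + K)"
    by (intro Bochner_Integration.integrable_add integrable_abs i2 hi integrable_const)
  then have i1: "integrable M Y1"
  proof (rule Bochner_Integration.integrable_bound)
    show "AE x in M. norm (Y1 x) \<le> norm (\<bar>Y2 x\<bar> + h x + K)"
    proof (rule AE_mp[OF AE_conjI[OF le AE_conjI[OF h0 lb1]]], rule AE_I2, clarify)
      fix x assume "Y1 x \<le> Y2 x + h x" "0 \<le> h x" "- K \<le> Y1 x"
      then show "norm (Y1 x) \<le> norm (\<bar>Y2 x\<bar> + h x + K)" using K by auto
    qed
  qed measurable
  have "integral\<^sup>L M Y1 \<le> integral\<^sup>L M (\<lambda>x. Y2 x + h x)"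
    using i1 i2 hi by (intro integral_mono_AE le) auto
  also have "\<dots> = integral\<^sup>L M Y2 + integral\<^sup>L M h" using i2 hi by simp
  finally show ?thesis using ext_exp_integrable[OF i1] ext_exp_integrable[OF i2] by simp
qed

end

lemma exp_int:
  fixes lam a :: real assumes lam: "lam > 0" and a: "a \<ge> 0"
  shows "(LINT t:{0..a}|lborel. exp (- lam * t)) = (1 - exp (- lam * a)) / lam"
proof -
  have "(LBINT t=ereal 0..ereal a. exp (- lam * t)) = (\<lambda>t. - exp (- lam * t) / lam) a - (\<lambda>t. - exp (- lam * t) / lam) 0"
  proof (rule interval_integral_FTC_finite[where F="\<lambda>t. - exp (- lam * t) / lam"])
    show "continuous_on {min 0 a..max 0 a} (\<lambda>t. exp (- lam * t))" by (intro continuous_intros)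
    fix x
    have "((\<lambda>t. - exp (- lam * t) / lam) has_real_derivative exp (- lam * x)) (at x)"
      using lam by (auto intro!: derivative_eq_intros)
    then show "((\<lambda>t. - exp (- lam * t) / lam) has_vector_derivative exp (- lam * x)) (at x within {min 0 a..max 0 a})"
      by (simp add: has_real_derivative_iff_has_vector_derivative[symmetric] has_field_derivative_at_within)
  qed
  then show ?thesis using a by (simp add: interval_integral_Icc diff_divide_distrib)
qed

lemma A_lb:
  fixes lam c a :: real and P :: "real \<Rightarrow> real"
  assumes lam: "lam > 0" and c: "c > 0" and a: "a \<ge> 0" and P: "\<And>t. t \<in> {0..a} \<Longrightarrow> 0 \<le> P t"
  shows "- (1 / c) * (1 - exp (- lam * a)) \<le> (LINT t:{0..a}|lborel. exp (- lam * t) * (P t - lam / c))"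
proof (cases "set_integrable lborel {0..a} (\<lambda>t. exp (- lam * t) * (P t - lam / c))")
  case True
  have gi: "set_integrable lborel {0..a} (\<lambda>t. exp (- lam * t) * (- lam / c))"
    unfolding set_integrable_def by (rule borel_integrable_compact) (use c in \<open>auto intro!: continuous_intros\<close>)
  have "(LINT t:{0..a}|lborel. exp (- lam * t) * (- lam / c)) \<le> (LINT t:{0..a}|lborel. exp (- lam * t) * (P t - lam / c))"
    by (intro set_integral_mono gi True mult_left_mono) (auto intro: P)
  moreover have "(LINT t:{0..a}|lborel. exp (- lam * t) * (- lam / c)) = (LINT t:{0..a}|lborel. exp (- lam * t)) * (- lam / c)"
    by (rule set_integral_mult_left)
  moreover have "(LINT t:{0..a}|lborel. exp (- lam * t)) * (- lam / c) = - (1 / c) * (1 - exp (- lam * a))"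
    unfolding exp_int[OF lam a] using lam c by (simp add: field_simps)
  ultimately show ?thesis by linarith
next
  case False
  then have "(LINT t:{0..a}|lborel. exp (- lam * t) * (P t - lam / c)) = 0"
    unfolding set_lebesgue_integral_def set_integrable_def by (simp add: not_integrable_integral_eq)
  moreover have "exp (- lam * a) \<le> 1" using lam a by simp
  ultimately show ?thesis using c by (simp add: mult_nonneg_nonneg)
qed

lemma LINT_ub:
  fixes F :: "real \<Rightarrow> real"
  assumes t: "0 \<le> t" and F: "\<And>s. s \<in> {0..t} \<Longrightarrow> 0 \<le> F s \<and> F s \<le> K"
  shows "(LINT s:{0..t}|lborel. F s) \<le> K * t"
proof (cases "set_integrable lborel {0..t} F")
  case True
  have ki: "set_integrable lborel {0..t} (\<lambda>_. K)"
    unfolding set_integrable_def by (rule borel_integrable_compact) auto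
  have "(LINT s:{0..t}|lborel. F s) \<le> (LINT s:{0..t}|lborel. K)"
    using True F by (intro set_integral_mono ki) auto
  also have "\<dots> = K * t" using t by (simp add: set_integral_const)
  finally show ?thesis .
next
  case False
  then have "(LINT s:{0..t}|lborel. F s) = 0"
    unfolding set_lebesgue_integral_def set_integrable_def by (simp add: not_integrable_integral_eq)
  moreover have "0 \<le> K" using F[of 0] t by auto
  ultimately show ?thesis using t by simp
qed

locale LS =
  fixes M :: "'w measure" and \<nu>0 :: "'e measure"
    and X :: "real \<Rightarrow> 'w \<Rightarrow> real" and T :: "nat \<Rightarrow> 'w \<Rightarrow> real" and Z :: "nat \<Rightarrow> 'w \<Rightarrow> 'e"
    and lam l0 l1 \<mu> c :: real and f :: "'e \<Rightarrow> real"
  assumes lam: "lam > 0" and l0: "l0 > 0" and l1: "l1 > 0" and c: "c > 0"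
    and f_nn: "\<And>x. f x \<ge> 0" and f_meas: "f \<in> borel_measurable \<nu>0"
    and wp: "wiener_process M X"
    and mp: "marked_poisson M l0 \<nu>0 T Z"
begin

sublocale prob_space M using wp by (simp add: wiener_process_def)

lemma X_meas: "t \<ge> 0 \<Longrightarrow> X t \<in> borel_measurable M"
  using wp by (simp add: wiener_process_def)

lemma X_cont: "\<omega> \<in> space M \<Longrightarrow> continuous_on {0..} (\<lambda>t. X t \<omega>)"
  using wp by (simp add: wiener_process_def)

lemma T_incr_distr: "distributed M lborel (\<lambda>\<omega>. T (Suc n) \<omega> - T n \<omega>) (exponential_density l0)"
  using mp by (simp add: marked_poisson_def)

lemma T0: "\<omega> \<in> space M \<Longrightarrow> T 0 \<omega> = 0"
  using mp by (simp add: marked_poisson_def)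

lemma T_meas[measurable]: "T n \<in> borel_measurable M"
proof (induction n)
  case 0
  then show ?case using T0 by (subst measurable_cong[where g="\<lambda>_. 0"]) auto
next
  case (Suc n)
  have "(\<lambda>\<omega>. T (Suc n) \<omega> - T n \<omega>) \<in> borel_measurable M"
    using distributed_measurable[OF T_incr_distr[of n]] by simp
  then have "(\<lambda>\<omega>. (T (Suc n) \<omega> - T n \<omega>) + T n \<omega>) \<in> borel_measurable M"
    using Suc by measurable
  then show ?case by simp
qed

lemma Z_meas: "n \<ge> 1 \<Longrightarrow> Z n \<in> measurable M \<nu>0"
  using mp by (simp add: marked_poisson_def)

lemma fZ_meas[measurable]: "n \<ge> 1 \<Longrightarrow> (\<lambda>\<omega>. f (Z n \<omega>)) \<in> borel_measurable M"
  using measurable_comp[OF Z_meas f_meas] by (simp add: comp_def)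

lemma Xp_joint: "(\<lambda>p. X (max 0 (fst p)) (snd p)) \<in> borel_measurable ((borel :: real measure) \<Otimes>\<^sub>M M)"
proof (rule borel_measurable_LIMSEQ_real)
  let ?u = "\<lambda>k p. X (max 0 (real_of_int \<lceil>fst p * real (Suc k)\<rceil> / real (Suc k))) (snd p)"
  show "?u k \<in> borel_measurable ((borel :: real measure) \<Otimes>\<^sub>M M)" for k
  proof (rule measurable_compose_countable'[where I=UNIV and g="\<lambda>p. \<lceil>fst p * real (Suc k)\<rceil>"
        and f="\<lambda>j p. X (max 0 (real_of_int j / real (Suc k))) (snd p)"])
    show "(\<lambda>p. X (max 0 (real_of_int j / real (Suc k))) (snd p)) \<in> borel_measurable ((borel :: real measure) \<Otimes>\<^sub>M M)" for j
      using measurable_comp[OF measurable_snd X_meas[of "max 0 (real_of_int j / real (Suc k))"]]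
      by (simp add: comp_def)
  qed auto
  fix p assume p: "p \<in> space ((borel :: real measure) \<Otimes>\<^sub>M M)"
  obtain t \<omega> where pe: "p = (t, \<omega>)" and \<omega>: "\<omega> \<in> space M" using p by (cases p) (auto simp: space_pair_measure)
  have lim: "(\<lambda>k. real_of_int \<lceil>t * real (Suc k)\<rceil> / real (Suc k)) \<longlonglongrightarrow> t"
  proof (rule tendsto_sandwich[where f="\<lambda>_. t" and h="\<lambda>k. t + 1 / real (Suc k)"])
    show "\<forall>\<^sub>F k in sequentially. t \<le> real_of_int \<lceil>t * real (Suc k)\<rceil> / real (Suc k)"
      by (intro always_eventually allI) (simp add: field_simps le_of_int_ceiling)
    show "\<forall>\<^sub>F k in sequentially. real_of_int \<lceil>t * real (Suc k)\<rceil> / real (Suc k) \<le> t + 1 / real (Suc k)"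
    proof (intro always_eventually allI)
      fix k
      have "real_of_int \<lceil>t * real (Suc k)\<rceil> \<le> t * real (Suc k) + 1"
        by linarith
      then show "real_of_int \<lceil>t * real (Suc k)\<rceil> / real (Suc k) \<le> t + 1 / real (Suc k)"
        by (simp add: divide_le_eq add_divide_distrib distrib_right del: of_nat_Suc)
    qed
    show "(\<lambda>k. t + 1 / real (Suc k)) \<longlonglongrightarrow> t"
      using tendsto_add[OF tendsto_const[of t] LIMSEQ_inverse_real_of_nat] by (simp add: inverse_eq_divide)
  qed simp
  have lim2: "(\<lambda>k. max 0 (real_of_int \<lceil>t * real (Suc k)\<rceil> / real (Suc k))) \<longlonglongrightarrow> max 0 t"
    by (intro tendsto_max tendsto_const lim)
  have "(\<lambda>k. X (max 0 (real_of_int \<lceil>t * real (Suc k)\<rceil> / real (Suc k))) \<omega>) \<longlonglongrightarrow> X (max 0 t) \<omega>"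
    by (rule continuous_on_tendsto_compose[OF X_cont[OF \<omega>] lim2]) auto
  then show "(\<lambda>k. ?u k p) \<longlonglongrightarrow> X (max 0 (fst p)) (snd p)" by (simp add: pe)
qed

lemma Xp_comp[measurable]:
  assumes [measurable]: "h \<in> borel_measurable N" "k \<in> measurable N M"
  shows "(\<lambda>x. X (max 0 (h x)) (k x)) \<in> borel_measurable N"
proof -
  have "(\<lambda>x. (h x, k x)) \<in> measurable N ((borel :: real measure) \<Otimes>\<^sub>M M)" by measurable
  from measurable_comp[OF this Xp_joint] show ?thesis by (simp add: comp_def)
qed

lemma T_comp[measurable]: "k \<in> measurable N M \<Longrightarrow> (\<lambda>x. T n (k x)) \<in> borel_measurable N"
  using measurable_comp[OF _ T_meas] by (auto simp: comp_def)

lemma fZ_comp[measurable]: "k \<in> measurable N M \<Longrightarrow> n \<ge> 1 \<Longrightarrow> (\<lambda>x. f (Z n (k x))) \<in> borel_measurable N"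
  using measurable_comp[OF _ fZ_meas] by (auto simp: comp_def)

lemma Lproc_meas[measurable]:
  assumes [measurable]: "h \<in> borel_measurable N" "k \<in> measurable N M"
  shows "(\<lambda>x. Lproc \<mu> l0 l1 f X T Z (max 0 (h x)) (k x)) \<in> borel_measurable N"
  unfolding Lproc_def
  by (intro borel_measurable_times borel_measurable_exp prod_dyn_meas) measurable

lemma Lratio_meas[measurable]:
  assumes [measurable]: "h \<in> borel_measurable N" "h' \<in> borel_measurable N" "k \<in> measurable N M"
  shows "(\<lambda>x. Lratio \<mu> l0 l1 f X T Z (max 0 (h' x)) (max 0 (h x)) (k x)) \<in> borel_measurable N"
  unfolding Lratio_def
  by (intro borel_measurable_times borel_measurable_exp prod_dyn_meas) measurable

lemma Phi_alt: "Phi lam \<mu> l0 l1 f X T Z \<phi> t \<omega> =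
   \<phi> * exp (lam * t) * Lproc \<mu> l0 l1 f X T Z t \<omega> +
   (\<integral>s. indicator {0..t} s * (lam * exp (lam * (t - s)) * Lratio \<mu> l0 l1 f X T Z (max 0 s) t \<omega>) \<partial>lborel)"
  unfolding Phi_def set_lebesgue_integral_def
  by (intro arg_cong2[where f="(+)"] refl Bochner_Integration.integral_cong) (auto split: split_indicator)

lemma Phi_meas[measurable]:
  assumes [measurable]: "h \<in> borel_measurable N" "k \<in> measurable N M"
  shows "(\<lambda>x. Phi lam \<mu> l0 l1 f X T Z \<phi> (max 0 (h x)) (k x)) \<in> borel_measurable N"
  unfolding Phi_alt
proof (intro borel_measurable_add borel_measurable_times borel_measurable_exp Lproc_meas)
  show "(\<lambda>x. \<integral>s. indicator {0..max 0 (h x)} s *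
      (lam * exp (lam * (max 0 (h x) - s)) * Lratio \<mu> l0 l1 f X T Z (max 0 s) (max 0 (h x)) (k x)) \<partial>lborel)
    \<in> borel_measurable N"
  proof (rule lborel.borel_measurable_lebesgue_integral)
    have [measurable]: "(\<lambda>y. Lratio \<mu> l0 l1 f X T Z (max 0 (snd y)) (max 0 (h (fst y))) (k (fst y)))
       \<in> borel_measurable (N \<Otimes>\<^sub>M borel)"
      by (rule Lratio_meas) measurable
    have eqm: "borel_measurable (N \<Otimes>\<^sub>M lborel) = borel_measurable (N \<Otimes>\<^sub>M borel)"
      by (rule measurable_cong_sets) (auto intro: sets_pair_measure_cong)
    have "(\<lambda>(x, s). indicator {0..max 0 (h x)} s *
      (lam * exp (lam * (max 0 (h x) - s)) * Lratio \<mu> l0 l1 f X T Z (max 0 s) (max 0 (h x)) (k x)))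
       \<in> borel_measurable (N \<Otimes>\<^sub>M borel)"
      unfolding split_beta' indicator_def atLeastAtMost_iff by measurable
    then show "(\<lambda>(x, s). indicator {0..max 0 (h x)} s *
      (lam * exp (lam * (max 0 (h x) - s)) * Lratio \<mu> l0 l1 f X T Z (max 0 s) (max 0 (h x)) (k x)))
       \<in> borel_measurable (N \<Otimes>\<^sub>M lborel)"
      by (simp only: eqm)
  qed
qed measurable

lemma filt_sub: "sets (nat_filtration M X t) \<subseteq> sets M"
proof -
  let ?G = "{X s -` B \<inter> space M | s B. 0 \<le> s \<and> s \<le> t \<and> B \<in> sets borel}"
  have G: "?G \<subseteq> sets M" using X_meas by (auto intro: measurable_sets)
  have "sets (nat_filtration M X t) = sigma_sets (space M) ?G"
    unfolding nat_filtration_def by (rule sets_measure_of) auto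
  with G show ?thesis using sets.sigma_sets_subset[OF G] by simp
qed

lemma st_meas:
  assumes st: "FX_stopping_time M X \<tau>" shows "\<tau> \<in> borel_measurable M"
proof (rule borel_measurableI_le)
  fix y :: ereal
  have nn: "\<And>\<omega>. \<omega> \<in> space M \<Longrightarrow> 0 \<le> \<tau> \<omega>" using st by (simp add: FX_stopping_time_def)
  show "{x \<in> space M. \<tau> x \<le> y} \<in> sets M"
  proof (cases y)
    case (real r)
    show ?thesis
    proof (cases "0 \<le> r")
      case True
      then have "{x \<in> space M. \<tau> x \<le> ereal r} \<in> sets (nat_filtration M X r)"
        using st by (simp add: FX_stopping_time_def)
      then show ?thesis using filt_sub real by auto
    next
      case False
      have "{x \<in> space M. \<tau> x \<le> y} = {}"
      proof safe
        fix x assume x: "x \<in> space M" "\<tau> x \<le> y"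
        then have "ereal 0 \<le> ereal r" using nn[OF x(1)] real order_trans by (metis zero_ereal_def)
        then show "x \<in> {}" using False by simp
      qed
      then show ?thesis by (metis sets.empty_sets)
    qed
  next
    case PInf
    then show ?thesis by simp
  next
    case MInf
    have "{x \<in> space M. \<tau> x \<le> y} = {}"
    proof safe
      fix x assume x: "x \<in> space M" "\<tau> x \<le> y"
      then have "0 \<le> (-\<infinity>::ereal)" using nn[OF x(1)] MInf order_trans by metis
      then show "x \<in> {}" by simp
    qed
    then show ?thesis by (metis sets.empty_sets)
  qed
qed

lemma incr_pos_AE: "AE \<omega> in M. 0 < T (Suc n) \<omega> - T n \<omega>"
proof -
  have "prob {x \<in> space M. T (Suc n) x - T n x \<le> 0} = 1 - exp (- 0 * l0)"
    by (rule exponential_distributedD_le[OF T_incr_distr]) (use l0 in auto)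
  then have p0: "prob {x \<in> space M. T (Suc n) x - T n x \<le> 0} = 0" by simp
  have "{x \<in> space M. T (Suc n) x - T n x \<le> 0} \<in> null_sets M"
    using p0 by (auto simp: null_sets_def emeasure_eq_measure)
  then show ?thesis by (rule AE_I') auto
qed

definition good :: "'w \<Rightarrow> bool" where
  "good \<omega> \<longleftrightarrow> \<omega> \<in> space M \<and> (\<forall>n. T n \<omega> < T (Suc n) \<omega>)"

lemma AE_good: "AE \<omega> in M. good \<omega>"
proof -
  have "AE \<omega> in M. \<forall>n. 0 < T (Suc n) \<omega> - T n \<omega>"
    using incr_pos_AE by (simp add: AE_all_countable)
  then show ?thesis unfolding good_def by (rule AE_mp) (auto intro!: AE_I2)
qed

lemma good_T1: "good \<omega> \<Longrightarrow> 0 < T 1 \<omega>"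
  unfolding good_def using T0 by (metis One_nat_def)

lemma good_Tn: "good \<omega> \<Longrightarrow> 2 \<le> n \<Longrightarrow> T 1 \<omega> < T n \<omega>"
proof -
  assume g: "good \<omega>" and n: "2 \<le> n"
  have sm: "strict_mono (\<lambda>n. T n \<omega>)"
    using g unfolding good_def by (intro strict_monoI_Suc) auto
  show ?thesis using strict_monoD[OF sm, of 1 n] n by simp
qed

lemma exp_moment: "(\<integral>\<^sup>+\<omega>. ennreal (exp (- lam * T 1 \<omega>)) \<partial>M) = ennreal (l0 / (lam + l0))"
proof -
  have "(\<integral>\<^sup>+\<omega>. ennreal (exp (- lam * T 1 \<omega>)) \<partial>M) =
      (\<integral>\<^sup>+\<omega>. ennreal (exp (- lam * (T (Suc 0) \<omega> - T 0 \<omega>))) \<partial>M)"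
    by (intro nn_integral_cong) (simp add: T0)
  also have "\<dots> = (\<integral>\<^sup>+x. ennreal (exponential_density l0 x) * ennreal (exp (- lam * x)) \<partial>lborel)"
    by (rule distributed_nn_integral[OF T_incr_distr, symmetric]) measurable
  also have "\<dots> = (\<integral>\<^sup>+x. ennreal (l0 / (lam + l0)) * ennreal (exponential_density (lam + l0) x) \<partial>lborel)"
  proof (intro nn_integral_cong)
    fix x :: real
    have "exponential_density l0 x * exp (- lam * x) = l0 / (lam + l0) * exponential_density (lam + l0) x"
    proof (cases "x < 0")
      case True then show ?thesis by (simp add: exponential_density_def)
    next
      case False
      have e: "exp (- x * l0) * exp (- lam * x) = exp (- x * (lam + l0))"
        by (simp add: exp_add[symmetric] algebra_simps)
      have "exponential_density l0 x * exp (- lam * x) = l0 * (exp (- x * l0) * exp (- lam * x))"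
        using False by (simp add: exponential_density_def)
      also have "\<dots> = l0 * exp (- x * (lam + l0))" by (simp only: e)
      finally have "exponential_density l0 x * exp (- lam * x) = l0 * exp (- x * (lam + l0))" .
      also have "\<dots> = l0 / (lam + l0) * ((lam + l0) * exp (- x * (lam + l0)))"
        using lam l0 by (simp add: field_simps)
      finally show ?thesis using False by (simp add: exponential_density_def)
    qed
    then show "ennreal (exponential_density l0 x) * ennreal (exp (- lam * x)) =
        ennreal (l0 / (lam + l0)) * ennreal (exponential_density (lam + l0) x)"
      using lam l0 by (simp add: ennreal_mult'[symmetric] exponential_density_nonneg)
  qed
  also have "\<dots> = ennreal (l0 / (lam + l0)) * (\<integral>\<^sup>+x. ennreal (exponential_density (lam + l0) x) \<partial>lborel)"
    by (rule nn_integral_cmult) measurable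
  also have "(\<integral>\<^sup>+x. ennreal (exponential_density (lam + l0) x) \<partial>lborel) = 1"
  proof -
    interpret P: prob_space "density lborel (exponential_density (lam + l0))"
      by (rule prob_space_exponential_density) (use lam l0 in auto)
    have "emeasure (density lborel (exponential_density (lam + l0))) UNIV = 1"
      using P.emeasure_space_1 by simp
    then show ?thesis by (simp add: emeasure_density)
  qed
  finally show ?thesis by simp
qed

lemma Lproc_nn: "0 \<le> Lproc \<mu> l0 l1 f X T Z t \<omega>"
  unfolding Lproc_def using l0 l1 f_nn by (intro mult_nonneg_nonneg prod_nonneg) auto

lemma Lratio_nn: "0 \<le> Lratio \<mu> l0 l1 f X T Z s t \<omega>"
  unfolding Lratio_def using l0 l1 f_nn by (intro mult_nonneg_nonneg prod_nonneg) auto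

lemma LINT_nn:
  fixes F :: "real \<Rightarrow> real"
  assumes "\<And>s. s \<in> S \<Longrightarrow> 0 \<le> F s" shows "0 \<le> (LINT s:S|lborel. F s)"
  unfolding set_lebesgue_integral_def
  by (rule integral_nonneg_AE) (auto split: split_indicator intro: assms)

lemma Phi_nn: "0 \<le> \<phi> \<Longrightarrow> 0 \<le> Phi lam \<mu> l0 l1 f X T Z \<phi> t \<omega>"
  unfolding Phi_def using lam Lproc_nn Lratio_nn
  by (intro add_nonneg_nonneg LINT_nn mult_nonneg_nonneg) auto

lemma Phi_mono: "\<phi>1 \<le> \<phi>2 \<Longrightarrow> Phi lam \<mu> l0 l1 f X T Z \<phi>1 t \<omega> \<le> Phi lam \<mu> l0 l1 f X T Z \<phi>2 t \<omega>"
  unfolding Phi_def using Lproc_nn by (intro add_right_mono mult_right_mono) auto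

definition Yf :: "(real \<Rightarrow> real) \<Rightarrow> real \<Rightarrow> ('w \<Rightarrow> ereal) \<Rightarrow> 'w \<Rightarrow> real" where
  "Yf w \<phi> \<tau> \<omega> =
     (LINT t:{0..real_of_ereal (min (\<tau> \<omega>) (ereal (T 1 \<omega>)))}|lborel.
        exp (- lam * t) * (Phi lam \<mu> l0 l1 f X T Z \<phi> t \<omega> - lam / c)) +
     (if ereal (T 1 \<omega>) \<le> \<tau> \<omega>
      then exp (- lam * T 1 \<omega>) * w (Phi lam \<mu> l0 l1 f X T Z \<phi> (T 1 \<omega>) \<omega>)
      else 0)"

lemma Jop_eq: "Jop M lam \<mu> l0 l1 c f X T Z w \<phi> =
   real_of_ereal (INF \<tau>\<in>{\<tau>. FX_stopping_time M X \<tau>}. ext_expectation M (Yf w \<phi> \<tau>))"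
  unfolding Jop_def Yf_def[abs_def] by simp

lemma min_bounds:
  assumes "0 \<le> \<tau>" "0 < t1"
  shows "ereal (real_of_ereal (min \<tau> (ereal t1))) = min \<tau> (ereal t1)"
    "0 \<le> real_of_ereal (min \<tau> (ereal t1))" "real_of_ereal (min \<tau> (ereal t1)) \<le> t1"
  using assms by (cases \<tau>; auto simp: min_def)+

definition Aalt :: "real \<Rightarrow> ('w \<Rightarrow> ereal) \<Rightarrow> 'w \<Rightarrow> real" where
  "Aalt \<phi> \<tau> \<omega> = (\<integral>t. indicator {0..real_of_ereal (min (\<tau> \<omega>) (ereal (T 1 \<omega>)))} t *
      (exp (- lam * t) * (Phi lam \<mu> l0 l1 f X T Z \<phi> (max 0 t) \<omega> - lam / c)) \<partial>lborel)"

lemma Aalt_eq: "(LINT t:{0..real_of_ereal (min (\<tau> \<omega>) (ereal (T 1 \<omega>)))}|lborel.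
        exp (- lam * t) * (Phi lam \<mu> l0 l1 f X T Z \<phi> t \<omega> - lam / c)) = Aalt \<phi> \<tau> \<omega>"
  unfolding set_lebesgue_integral_def Aalt_def
  by (intro Bochner_Integration.integral_cong) (auto split: split_indicator)

lemma Aalt_meas:
  assumes st: "FX_stopping_time M X \<tau>" shows "Aalt \<phi> \<tau> \<in> borel_measurable M"
proof -
  have [measurable]: "\<tau> \<in> borel_measurable M" by (rule st_meas[OF st])
  have eqm: "borel_measurable (M \<Otimes>\<^sub>M lborel) = borel_measurable (M \<Otimes>\<^sub>M borel)"
    by (rule measurable_cong_sets) (auto intro: sets_pair_measure_cong)
  have [measurable]: "(\<lambda>y. Phi lam \<mu> l0 l1 f X T Z \<phi> (max 0 (snd y)) (fst y)) \<in> borel_measurable (M \<Otimes>\<^sub>M borel)"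
    by (rule Phi_meas) measurable
  have "(\<lambda>(\<omega>, t). indicator {0..real_of_ereal (min (\<tau> \<omega>) (ereal (T 1 \<omega>)))} t *
      (exp (- lam * t) * (Phi lam \<mu> l0 l1 f X T Z \<phi> (max 0 t) \<omega> - lam / c))) \<in> borel_measurable (M \<Otimes>\<^sub>M borel)"
    unfolding split_beta' indicator_def atLeastAtMost_iff by measurable
  then have "(\<lambda>(\<omega>, t). indicator {0..real_of_ereal (min (\<tau> \<omega>) (ereal (T 1 \<omega>)))} t *
      (exp (- lam * t) * (Phi lam \<mu> l0 l1 f X T Z \<phi> (max 0 t) \<omega> - lam / c))) \<in> borel_measurable (M \<Otimes>\<^sub>M lborel)"
    by (simp only: eqm)
  then show ?thesis unfolding Aalt_def by (rule lborel.borel_measurable_lebesgue_integral)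
qed

lemma Y_ae_meas:
  assumes st: "FX_stopping_time M X \<tau>" and w: "mono_on {0..} w" and \<phi>: "0 \<le> \<phi>"
  shows "\<exists>Y'. Y' \<in> borel_measurable M \<and> (AE \<omega> in M. Yf w \<phi> \<tau> \<omega> = Y' \<omega>)"
proof -
  have [measurable]: "\<tau> \<in> borel_measurable M" by (rule st_meas[OF st])
  define w' where "w' x = w (max 0 x)" for x
  have "mono w'" unfolding w'_def
    by (intro monoI mono_onD[OF w]) auto
  then have [measurable]: "w' \<in> borel_measurable borel" by (rule borel_measurable_mono)
  have [measurable]: "(\<lambda>\<omega>. Phi lam \<mu> l0 l1 f X T Z \<phi> (max 0 (T 1 \<omega>)) \<omega>) \<in> borel_measurable M"
    by (rule Phi_meas) measurable
  have [measurable]: "Aalt \<phi> \<tau> \<in> borel_measurable M" by (rule Aalt_meas[OF st])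
  let ?Y = "\<lambda>\<omega>. Aalt \<phi> \<tau> \<omega> + (if ereal (T 1 \<omega>) \<le> \<tau> \<omega>
      then exp (- lam * T 1 \<omega>) * w' (Phi lam \<mu> l0 l1 f X T Z \<phi> (max 0 (T 1 \<omega>)) \<omega>) else 0)"
  have "?Y \<in> borel_measurable M" by measurable
  moreover have "AE \<omega> in M. Yf w \<phi> \<tau> \<omega> = ?Y \<omega>"
  proof (rule AE_mp[OF AE_good], rule AE_I2, rule impI)
    fix \<omega> assume g: "good \<omega>"
    have "max 0 (T 1 \<omega>) = T 1 \<omega>" using good_T1[OF g] by simp
    moreover have "w' (Phi lam \<mu> l0 l1 f X T Z \<phi> (T 1 \<omega>) \<omega>) = w (Phi lam \<mu> l0 l1 f X T Z \<phi> (T 1 \<omega>) \<omega>)"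
      unfolding w'_def using Phi_nn[OF \<phi>] by (simp add: max_absorb2)
    ultimately show "Yf w \<phi> \<tau> \<omega> = ?Y \<omega>" unfolding Yf_def Aalt_eq by simp
  qed
  ultimately show ?thesis by blast
qed

lemma st_nn: "FX_stopping_time M X \<tau> \<Longrightarrow> \<omega> \<in> space M \<Longrightarrow> 0 \<le> \<tau> \<omega>"
  by (simp add: FX_stopping_time_def)

lemma Y_lb:
  assumes st: "FX_stopping_time M X \<tau>" and wl: "\<And>x. 0 \<le> x \<Longrightarrow> - (1 / c) \<le> w x" and \<phi>: "0 \<le> \<phi>"
  shows "AE \<omega> in M. - (1 / c) \<le> Yf w \<phi> \<tau> \<omega>"
proof (rule AE_mp[OF AE_good], rule AE_I2, rule impI)
  fix \<omega> assume g: "good \<omega>"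
  have sp: "\<omega> \<in> space M" using g by (simp add: good_def)
  have t1: "0 < T 1 \<omega>" by (rule good_T1[OF g])
  have tn: "0 \<le> \<tau> \<omega>" by (rule st_nn[OF st sp])
  define a where "a = real_of_ereal (min (\<tau> \<omega>) (ereal (T 1 \<omega>)))"
  have a0: "0 \<le> a" unfolding a_def by (rule min_bounds(2)[OF tn t1])
  have A: "- (1 / c) * (1 - exp (- lam * a)) \<le>
      (LINT t:{0..a}|lborel. exp (- lam * t) * (Phi lam \<mu> l0 l1 f X T Z \<phi> t \<omega> - lam / c))"
    by (rule A_lb[OF lam c a0]) (rule Phi_nn[OF \<phi>])
  have ea: "0 < exp (- lam * a)" by simp
  show "- (1 / c) \<le> Yf w \<phi> \<tau> \<omega>"
  proof (cases "ereal (T 1 \<omega>) \<le> \<tau> \<omega>")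
    case True
    then have aT: "a = T 1 \<omega>" unfolding a_def by (simp add: min_def)
    have B: "exp (- lam * T 1 \<omega>) * (- (1 / c)) \<le> exp (- lam * T 1 \<omega>) * w (Phi lam \<mu> l0 l1 f X T Z \<phi> (T 1 \<omega>) \<omega>)"
      by (intro mult_left_mono wl Phi_nn[OF \<phi>]) auto
    have ar: "- (1 / c) = exp (- lam * a) * (- (1 / c)) + - (1 / c) * (1 - exp (- lam * a))"
      by (simp add: algebra_simps)
    have "Yf w \<phi> \<tau> \<omega> = (LINT t:{0..a}|lborel. exp (- lam * t) * (Phi lam \<mu> l0 l1 f X T Z \<phi> t \<omega> - lam / c))
       + exp (- lam * T 1 \<omega>) * w (Phi lam \<mu> l0 l1 f X T Z \<phi> (T 1 \<omega>) \<omega>)"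
      unfolding Yf_def a_def[symmetric] using True by simp
    then show ?thesis using A B ar unfolding aT by linarith
  next
    case False
    have "- (1 / c) \<le> - (1 / c) * (1 - exp (- lam * a))" using c ea
      by (simp add: field_simps)
    have "Yf w \<phi> \<tau> \<omega> = (LINT t:{0..a}|lborel. exp (- lam * t) * (Phi lam \<mu> l0 l1 f X T Z \<phi> t \<omega> - lam / c))"
      unfolding Yf_def a_def[symmetric] using False by simp
    then show ?thesis using A \<open>- (1 / c) \<le> - (1 / c) * (1 - exp (- lam * a))\<close> by linarith
  qed
qed

lemma st_zero: "FX_stopping_time M X (\<lambda>_. 0)"
  unfolding FX_stopping_time_def nat_filtration_def by auto

lemma Y_zero: "AE \<omega> in M. Yf w \<phi> (\<lambda>_. 0) \<omega> = 0"
proof (rule AE_mp[OF AE_good], rule AE_I2, rule impI)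
  fix \<omega> assume g: "good \<omega>"
  have t1: "0 < T 1 \<omega>" by (rule good_T1[OF g])
  then have m: "real_of_ereal (min (0::ereal) (ereal (T 1 \<omega>))) = 0" by (simp add: min_def)
  have "(LINT t:{0..0}|lborel. exp (- lam * t) * (Phi lam \<mu> l0 l1 f X T Z \<phi> t \<omega> - lam / c)) = 0"
    unfolding set_lebesgue_integral_def
    by (rule integral_eq_zero_AE) (rule AE_mp[OF AE_lborel_singleton[of 0]], auto)
  then show "Yf w \<phi> (\<lambda>_. 0) \<omega> = 0" unfolding Yf_def m using t1 by simp
qed

lemma prod_sub1:
  fixes g :: "nat \<Rightarrow> real"
  assumes "S \<subseteq> {1}" "\<And>n. 0 \<le> g n"
  shows "0 \<le> prod g S" "prod g S \<le> max 1 (g 1)"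
proof -
  have "S = {} \<or> S = {1}" using assms(1) by auto
  then show "0 \<le> prod g S" "prod g S \<le> max 1 (g 1)" using assms(2) by auto
qed

lemma good_set: "good \<omega> \<Longrightarrow> t \<le> T 1 \<omega> \<Longrightarrow> {n. 1 \<le> n \<and> P n \<and> T n \<omega> \<le> t} \<subseteq> {1}"
proof safe
  fix n assume "good \<omega>" "t \<le> T 1 \<omega>" "1 \<le> n" "T n \<omega> \<le> t"
  moreover have "2 \<le> n \<Longrightarrow> T 1 \<omega> < T n \<omega>" using good_Tn[OF \<open>good \<omega>\<close>] by blast
  ultimately show "n = 1" by linarith
qed

lemma good_set': "good \<omega> \<Longrightarrow> t \<le> T 1 \<omega> \<Longrightarrow> {n. 1 \<le> n \<and> T n \<omega> \<le> t} \<subseteq> {1}"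
  using good_set[of \<omega> t "\<lambda>_. True"] by simp

lemma exp_arg_bound:
  fixes m kk xt xs B s t Tt :: real
  assumes "\<bar>xt\<bar> \<le> B" "\<bar>xs\<bar> \<le> B" "0 \<le> s" "s \<le> t" "t \<le> Tt"
  shows "m * (xt - xs) - kk * (t - s) \<le> 2 * \<bar>m\<bar> * B + \<bar>kk\<bar> * Tt"
proof -
  have "m * (xt - xs) \<le> \<bar>m\<bar> * \<bar>xt - xs\<bar>" by (metis abs_ge_self abs_mult)
  also have "\<dots> \<le> \<bar>m\<bar> * (2 * B)" using assms by (intro mult_left_mono) auto
  finally have 1: "m * (xt - xs) \<le> 2 * \<bar>m\<bar> * B" by simp
  have "- kk * (t - s) \<le> \<bar>kk\<bar> * \<bar>t - s\<bar>" by (metis abs_ge_self abs_minus_cancel abs_mult)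
  also have "\<dots> \<le> \<bar>kk\<bar> * Tt" using assms by (intro mult_left_mono) auto
  finally show ?thesis using 1 by simp
qed

lemma Phi_bdd:
  assumes g: "good \<omega>" and \<phi>: "0 \<le> \<phi>"
  shows "\<exists>C. \<forall>t\<in>{0..T 1 \<omega>}. Phi lam \<mu> l0 l1 f X T Z \<phi> t \<omega> \<le> C"
proof -
  define Tt where "Tt = T 1 \<omega>"
  have sp: "\<omega> \<in> space M" using g by (simp add: good_def)
  have "compact ((\<lambda>t. X t \<omega>) ` {0..Tt})"
    by (rule compact_continuous_image) (auto intro: continuous_on_subset[OF X_cont[OF sp]])
  then have "bounded ((\<lambda>t. X t \<omega>) ` {0..Tt})" by (rule compact_imp_bounded)
  then obtain B where "\<forall>x\<in>(\<lambda>t. X t \<omega>) ` {0..Tt}. norm x \<le> B" unfolding bounded_iff by blast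
  then have B: "\<And>t. t \<in> {0..Tt} \<Longrightarrow> \<bar>X t \<omega>\<bar> \<le> B" by auto
  define \<kappa> where "\<kappa> = \<mu>\<^sup>2 / 2 + l1 - l0"
  define g where "g n = l1 / l0 * f (Z n \<omega>)" for n
  have g0: "0 \<le> g n" for n unfolding g_def using l0 l1 f_nn by simp
  define Cp where "Cp = max 1 (g 1)"
  define E0 where "E0 = exp (2 * \<bar>\<mu>\<bar> * B + \<bar>\<kappa>\<bar> * Tt)"
  have Cp0: "0 \<le> Cp" unfolding Cp_def by simp
  have E00: "0 \<le> E0" unfolding E0_def by simp
  have LR: "Lratio \<mu> l0 l1 f X T Z s t \<omega> \<le> E0 * Cp" if st: "0 \<le> s" "s \<le> t" "t \<le> Tt" for s t
  proof -
    have "exp (\<mu> * (X t \<omega> - X s \<omega>) - (\<mu>\<^sup>2 / 2 + l1 - l0) * (t - s)) \<le> E0"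
      unfolding E0_def \<kappa>_def[symmetric] using st
      by (intro exp_mono exp_arg_bound B) auto
    moreover have "(\<Prod>n\<in>{n. 1 \<le> n \<and> s < T n \<omega> \<and> T n \<omega> \<le> t}. l1 / l0 * f (Z n \<omega>)) \<le> Cp"
      "0 \<le> (\<Prod>n\<in>{n. 1 \<le> n \<and> s < T n \<omega> \<and> T n \<omega> \<le> t}. l1 / l0 * f (Z n \<omega>))"
      using prod_sub1[OF good_set[OF g, of t "\<lambda>n. s < T n \<omega>"] g0] st
      unfolding Cp_def g_def Tt_def by auto
    ultimately show ?thesis unfolding Lratio_def using E00 by (intro mult_mono) auto
  qed
  have LP: "Lproc \<mu> l0 l1 f X T Z t \<omega> \<le> E0 * Cp" if st: "0 \<le> t" "t \<le> Tt" for t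
  proof -
    have "\<bar>0::real\<bar> \<le> B" using B[of t] st by auto
    then have "\<mu> * (X t \<omega> - 0) - (\<mu>\<^sup>2 / 2 + l1 - l0) * (t - 0) \<le> 2 * \<bar>\<mu>\<bar> * B + \<bar>\<kappa>\<bar> * Tt"
      unfolding \<kappa>_def using st by (intro exp_arg_bound B) auto
    then have "exp (\<mu> * X t \<omega> - (\<mu>\<^sup>2 / 2 + l1 - l0) * t) \<le> E0"
      unfolding E0_def by simp
    moreover have "(\<Prod>n\<in>{n. 1 \<le> n \<and> T n \<omega> \<le> t}. l1 / l0 * f (Z n \<omega>)) \<le> Cp"
      "0 \<le> (\<Prod>n\<in>{n. 1 \<le> n \<and> T n \<omega> \<le> t}. l1 / l0 * f (Z n \<omega>))"
      using prod_sub1[OF good_set'[OF g, of t] g0] st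
      unfolding Cp_def g_def Tt_def by auto
    ultimately show ?thesis unfolding Lproc_def using E00 by (intro mult_mono) auto
  qed
  define K2 where "K2 = lam * exp (lam * Tt) * (E0 * Cp)"
  have inner: "(LINT s:{0..t}|lborel. lam * exp (lam * (t - s)) * Lratio \<mu> l0 l1 f X T Z s t \<omega>) \<le> K2 * Tt"
    if st: "0 \<le> t" "t \<le> Tt" for t
  proof -
    have "(LINT s:{0..t}|lborel. lam * exp (lam * (t - s)) * Lratio \<mu> l0 l1 f X T Z s t \<omega>) \<le> K2 * t"
    proof (rule LINT_ub[OF st(1)])
      fix s assume s: "s \<in> {0..t}"
      have "lam * exp (lam * (t - s)) \<le> lam * exp (lam * Tt)"
        using s st lam by (intro mult_left_mono) auto
      then show "0 \<le> lam * exp (lam * (t - s)) * Lratio \<mu> l0 l1 f X T Z s t \<omega> \<and>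
          lam * exp (lam * (t - s)) * Lratio \<mu> l0 l1 f X T Z s t \<omega> \<le> K2"
        unfolding K2_def using lam s st LR[of s t] Lratio_nn
        by (intro conjI mult_nonneg_nonneg mult_mono) auto
    qed
    also have "\<dots> \<le> K2 * Tt" unfolding K2_def using st lam Cp0 E00 by (intro mult_left_mono) auto
    finally show ?thesis .
  qed
  show ?thesis
  proof (intro exI ballI)
    fix t assume t: "t \<in> {0..T 1 \<omega>}"
    have "\<phi> * exp (lam * t) * Lproc \<mu> l0 l1 f X T Z t \<omega> \<le> \<phi> * exp (lam * Tt) * (E0 * Cp)"
      using t \<phi> lam LP[of t] Lproc_nn unfolding Tt_def by (intro mult_mono) auto
    then show "Phi lam \<mu> l0 l1 f X T Z \<phi> t \<omega> \<le> \<phi> * exp (lam * Tt) * (E0 * Cp) + K2 * Tt"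
      unfolding Phi_def using inner[of t] t unfolding Tt_def by auto
  qed
qed

lemma Phi_int:
  assumes g: "good \<omega>" and \<phi>: "0 \<le> \<phi>" and a: "0 \<le> a" "a \<le> T 1 \<omega>"
  shows "set_integrable lborel {0..a} (\<lambda>t. exp (- lam * t) * (Phi lam \<mu> l0 l1 f X T Z \<phi> t \<omega> - lam / c))"
proof -
  have sp: "\<omega> \<in> space M" using g by (simp add: good_def)
  obtain C where C: "\<And>t. t \<in> {0..T 1 \<omega>} \<Longrightarrow> Phi lam \<mu> l0 l1 f X T Z \<phi> t \<omega> \<le> C"
    using Phi_bdd[OF g \<phi>] by blast
  have C0: "0 \<le> C" using C[of 0] Phi_nn[OF \<phi>, of 0 \<omega>] good_T1[OF g] by auto
  have [measurable]: "(\<lambda>t. Phi lam \<mu> l0 l1 f X T Z \<phi> (max 0 t) \<omega>) \<in> borel_measurable lborel"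
    by (rule Phi_meas) (auto simp: sp)
  have "set_integrable lborel {0..a} (\<lambda>t. exp (- lam * t) * (Phi lam \<mu> l0 l1 f X T Z \<phi> (max 0 t) \<omega> - lam / c))"
    unfolding set_integrable_def
  proof (rule integrableI_bounded_set_indicator[where B="C + lam / c"])
    show "AE x in lborel. x \<in> {0..a} \<longrightarrow>
        norm (exp (- lam * x) * (Phi lam \<mu> l0 l1 f X T Z \<phi> (max 0 x) \<omega> - lam / c)) \<le> C + lam / c"
    proof (rule AE_I2, rule impI)
      fix x assume x: "x \<in> {0..a}"
      then have mx: "max 0 x = x" by simp
      have p0: "0 \<le> Phi lam \<mu> l0 l1 f X T Z \<phi> x \<omega>" by (rule Phi_nn[OF \<phi>])
      have pC: "Phi lam \<mu> l0 l1 f X T Z \<phi> x \<omega> \<le> C" using x a by (intro C) auto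
      have e1: "exp (- lam * x) \<le> 1" using x lam by auto
      have l0': "0 \<le> lam / c" using lam c by simp
      have "\<bar>Phi lam \<mu> l0 l1 f X T Z \<phi> x \<omega> - lam / c\<bar> \<le> C + lam / c" using p0 pC l0' by linarith
      then have "exp (- lam * x) * \<bar>Phi lam \<mu> l0 l1 f X T Z \<phi> x \<omega> - lam / c\<bar> \<le> 1 * (C + lam / c)"
        using e1 by (intro mult_mono) auto
      then show "norm (exp (- lam * x) * (Phi lam \<mu> l0 l1 f X T Z \<phi> (max 0 x) \<omega> - lam / c)) \<le> C + lam / c"
        unfolding mx by (simp add: abs_mult)
    qed
  qed (use a in auto)
  then show ?thesis by (rule set_integrable_cong[THEN iffD1, rotated -1]) auto
qed

lemma Y_mono_phi:
  assumes st: "FX_stopping_time M X \<tau>" and w: "mono_on {0..} w" and \<phi>: "0 \<le> \<phi>1" "\<phi>1 \<le> \<phi>2"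
  shows "AE \<omega> in M. Yf w \<phi>1 \<tau> \<omega> \<le> Yf w \<phi>2 \<tau> \<omega>"
proof (rule AE_mp[OF AE_good], rule AE_I2, rule impI)
  fix \<omega> assume g: "good \<omega>"
  have sp: "\<omega> \<in> space M" using g by (simp add: good_def)
  have t1: "0 < T 1 \<omega>" by (rule good_T1[OF g])
  have tn: "0 \<le> \<tau> \<omega>" by (rule st_nn[OF st sp])
  define a where "a = real_of_ereal (min (\<tau> \<omega>) (ereal (T 1 \<omega>)))"
  have a0: "0 \<le> a" unfolding a_def by (rule min_bounds(2)[OF tn t1])
  have a1: "a \<le> T 1 \<omega>" unfolding a_def by (rule min_bounds(3)[OF tn t1])
  have \<phi>2: "0 \<le> \<phi>2" using \<phi> by simp
  have A: "(LINT t:{0..a}|lborel. exp (- lam * t) * (Phi lam \<mu> l0 l1 f X T Z \<phi>1 t \<omega> - lam / c))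
     \<le> (LINT t:{0..a}|lborel. exp (- lam * t) * (Phi lam \<mu> l0 l1 f X T Z \<phi>2 t \<omega> - lam / c))"
    by (intro set_integral_mono Phi_int[OF g \<phi>(1) a0 a1] Phi_int[OF g \<phi>2 a0 a1]
        mult_left_mono diff_right_mono Phi_mono \<phi>(2)) auto
  have B: "exp (- lam * T 1 \<omega>) * w (Phi lam \<mu> l0 l1 f X T Z \<phi>1 (T 1 \<omega>) \<omega>) \<le>
      exp (- lam * T 1 \<omega>) * w (Phi lam \<mu> l0 l1 f X T Z \<phi>2 (T 1 \<omega>) \<omega>)"
    by (intro mult_left_mono mono_onD[OF w] Phi_mono \<phi>(2)) (auto intro: Phi_nn \<phi>(1) \<phi>2)
  show "Yf w \<phi>1 \<tau> \<omega> \<le> Yf w \<phi>2 \<tau> \<omega>"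
  proof (cases "ereal (T 1 \<omega>) \<le> \<tau> \<omega>")
    case True
    have "Yf w \<phi>1 \<tau> \<omega> = (LINT t:{0..a}|lborel. exp (- lam * t) * (Phi lam \<mu> l0 l1 f X T Z \<phi>1 t \<omega> - lam / c))
       + exp (- lam * T 1 \<omega>) * w (Phi lam \<mu> l0 l1 f X T Z \<phi>1 (T 1 \<omega>) \<omega>)"
      unfolding Yf_def a_def[symmetric] using True by simp
    moreover have "Yf w \<phi>2 \<tau> \<omega> = (LINT t:{0..a}|lborel. exp (- lam * t) * (Phi lam \<mu> l0 l1 f X T Z \<phi>2 t \<omega> - lam / c))
       + exp (- lam * T 1 \<omega>) * w (Phi lam \<mu> l0 l1 f X T Z \<phi>2 (T 1 \<omega>) \<omega>)"
      unfolding Yf_def a_def[symmetric] using True by simp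
    ultimately show ?thesis using A B by linarith
  next
    case False
    then show ?thesis unfolding Yf_def a_def[symmetric] using A by simp
  qed
qed

definition Wc :: "(real \<Rightarrow> real) \<Rightarrow> bool" where
  "Wc w \<longleftrightarrow> (\<forall>x\<ge>0. - (1 / c) \<le> w x \<and> w x \<le> 0) \<and> mono_on {0..} w"

definition Ie :: "(real \<Rightarrow> real) \<Rightarrow> real \<Rightarrow> ereal" where
  "Ie w \<phi> = (INF \<tau>\<in>{\<tau>. FX_stopping_time M X \<tau>}. ext_expectation M (Yf w \<phi> \<tau>))"

lemma Jop_Ie: "Jop M lam \<mu> l0 l1 c f X T Z w \<phi> = real_of_ereal (Ie w \<phi>)"
  unfolding Jop_eq Ie_def ..

lemma Ie_bounds:
  assumes W: "Wc w" and \<phi>: "0 \<le> \<phi>"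
  shows "- ereal (1 / c) \<le> Ie w \<phi>" "Ie w \<phi> \<le> 0"
proof -
  have wl: "\<And>x. 0 \<le> x \<Longrightarrow> - (1 / c) \<le> w x" using W by (simp add: Wc_def)
  show "- ereal (1 / c) \<le> Ie w \<phi>" unfolding Ie_def
  proof (rule INF_greatest)
    fix \<tau> assume "\<tau> \<in> {\<tau>. FX_stopping_time M X \<tau>}"
    then have st: "FX_stopping_time M X \<tau>" by simp
    show "- ereal (1 / c) \<le> ext_expectation M (Yf w \<phi> \<tau>)"
      by (rule ext_exp_lower[OF Y_lb[where w=w, OF st wl \<phi>]]) (use c in auto)
  qed
  have "Ie w \<phi> \<le> ext_expectation M (Yf w \<phi> (\<lambda>_. 0))"
    unfolding Ie_def by (rule INF_lower) (simp add: st_zero)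
  also have "\<dots> = ext_expectation M (\<lambda>_. 0)" by (rule ext_exp_cong[OF Y_zero])
  also have "\<dots> = 0" by (simp add: ext_expectation_def)
  finally show "Ie w \<phi> \<le> 0" .
qed

lemma ereal_bounds:
  assumes "- ereal K \<le> I" "I \<le> 0"
  shows "I = ereal (real_of_ereal I)" "- K \<le> real_of_ereal I" "real_of_ereal I \<le> 0"
  using assms by (cases I; auto)+

lemma J_W:
  assumes W: "Wc w" shows "Wc (Jop M lam \<mu> l0 l1 c f X T Z w)"
  unfolding Wc_def Jop_Ie
proof (intro conjI allI impI mono_onI)
  fix x :: real assume x: "0 \<le> x"
  show "- (1 / c) \<le> real_of_ereal (Ie w x)" by (rule ereal_bounds(2)[OF Ie_bounds[OF W x]])
  show "real_of_ereal (Ie w x) \<le> 0" by (rule ereal_bounds(3)[OF Ie_bounds[OF W x]])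
next
  fix x y :: real assume x: "x \<in> {0..}" and y: "y \<in> {0..}" and xy: "x \<le> y"
  have wm: "mono_on {0..} w" using W by (simp add: Wc_def)
  have "Ie w x \<le> Ie w y" unfolding Ie_def
  proof (rule INF_mono)
    fix \<tau> assume "\<tau> \<in> {\<tau>. FX_stopping_time M X \<tau>}"
    then have st: "FX_stopping_time M X \<tau>" by simp
    have "ext_expectation M (Yf w x \<tau>) \<le> ext_expectation M (Yf w y \<tau>)"
      by (rule ext_exp_mono[OF Y_mono_phi[OF st wm _ xy]]) (use x in auto)
    then show "\<exists>m\<in>{\<tau>. FX_stopping_time M X \<tau>}. ext_expectation M (Yf w x m) \<le> ext_expectation M (Yf w y \<tau>)"
      using st by blast
  qed
  moreover have "Ie w x = ereal (real_of_ereal (Ie w x))" using x by (intro ereal_bounds(1)[OF Ie_bounds[OF W]]) auto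
  moreover have "Ie w y = ereal (real_of_ereal (Ie w y))" using y by (intro ereal_bounds(1)[OF Ie_bounds[OF W]]) auto
  ultimately show "real_of_ereal (Ie w x) \<le> real_of_ereal (Ie w y)" by (metis ereal_less_eq(3))
qed

lemma Y_diff:
  assumes g: "good \<omega>" and \<phi>: "0 \<le> \<phi>" and le: "\<And>x. 0 \<le> x \<Longrightarrow> w1 x \<le> w2 x + \<delta>" and d0: "0 \<le> \<delta>"
  shows "Yf w1 \<phi> \<tau> \<omega> \<le> Yf w2 \<phi> \<tau> \<omega> + \<delta> * exp (- lam * T 1 \<omega>)"
proof -
  let ?P = "Phi lam \<mu> l0 l1 f X T Z \<phi> (T 1 \<omega>) \<omega>"
  have "exp (- lam * T 1 \<omega>) * w1 ?P \<le> exp (- lam * T 1 \<omega>) * (w2 ?P + \<delta>)"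
    by (intro mult_left_mono le Phi_nn[OF \<phi>]) auto
  then have B: "exp (- lam * T 1 \<omega>) * w1 ?P \<le> exp (- lam * T 1 \<omega>) * w2 ?P + \<delta> * exp (- lam * T 1 \<omega>)"
    by (simp add: algebra_simps)
  show ?thesis
  proof (cases "ereal (T 1 \<omega>) \<le> \<tau> \<omega>")
    case True
    then show ?thesis unfolding Yf_def using B by simp
  next
    case False
    then show ?thesis unfolding Yf_def using d0 by simp
  qed
qed

lemma ereal_shift: "(x::ereal) \<le> y + ereal r \<longleftrightarrow> x - ereal r \<le> y"
  by (cases x; cases y) auto

lemma J_contr:
  assumes W1: "Wc w1" and W2: "Wc w2" and le: "\<And>x. 0 \<le> x \<Longrightarrow> w1 x \<le> w2 x + \<delta>" and \<phi>: "0 \<le> \<phi>"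
    and d0: "0 \<le> \<delta>"
  shows "Jop M lam \<mu> l0 l1 c f X T Z w1 \<phi> \<le> Jop M lam \<mu> l0 l1 c f X T Z w2 \<phi> + l0 / (lam + l0) * \<delta>"
proof -
  define q where "q = l0 / (lam + l0)"
  have q0: "0 \<le> q" unfolding q_def using lam l0 by simp
  define h where "h \<omega> = \<delta> * exp (- lam * T 1 \<omega>)" for \<omega>
  have [measurable]: "h \<in> borel_measurable M" unfolding h_def by measurable
  have h0: "AE \<omega> in M. 0 \<le> h \<omega>" unfolding h_def using d0 by simp
  have hn: "(\<integral>\<^sup>+\<omega>. ennreal (h \<omega>) \<partial>M) = ennreal (\<delta> * q)"
  proof -
    have "(\<integral>\<^sup>+\<omega>. ennreal (h \<omega>) \<partial>M) = (\<integral>\<^sup>+\<omega>. ennreal \<delta> * ennreal (exp (- lam * T 1 \<omega>)) \<partial>M)"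
      unfolding h_def using d0 by (intro nn_integral_cong) (simp add: ennreal_mult)
    also have "\<dots> = ennreal \<delta> * (\<integral>\<^sup>+\<omega>. ennreal (exp (- lam * T 1 \<omega>)) \<partial>M)"
      by (rule nn_integral_cmult) measurable
    also have "\<dots> = ennreal (\<delta> * q)" unfolding exp_moment q_def[symmetric] using d0 q0 by (simp add: ennreal_mult)
    finally show ?thesis .
  qed
  have hi: "integrable M h" by (rule integrableI_nonneg) (use h0 hn in auto)
  have hI: "integral\<^sup>L M h = \<delta> * q"
    using integral_eq_nn_integral[of h M] h0 hn d0 q0 by simp
  have w1l: "\<And>x. 0 \<le> x \<Longrightarrow> - (1 / c) \<le> w1 x" using W1 by (simp add: Wc_def)
  have w2l: "\<And>x. 0 \<le> x \<Longrightarrow> - (1 / c) \<le> w2 x" using W2 by (simp add: Wc_def)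
  have w1m: "mono_on {0..} w1" using W1 by (simp add: Wc_def)
  have w2m: "mono_on {0..} w2" using W2 by (simp add: Wc_def)
  have each: "Ie w1 \<phi> - ereal (\<delta> * q) \<le> ext_expectation M (Yf w2 \<phi> \<tau>)"
    if st: "FX_stopping_time M X \<tau>" for \<tau>
  proof -
    obtain Y1 where Y1[measurable]: "Y1 \<in> borel_measurable M" and ae1: "AE \<omega> in M. Yf w1 \<phi> \<tau> \<omega> = Y1 \<omega>"
      using Y_ae_meas[OF st w1m \<phi>] by blast
    obtain Y2 where Y2[measurable]: "Y2 \<in> borel_measurable M" and ae2: "AE \<omega> in M. Yf w2 \<phi> \<tau> \<omega> = Y2 \<omega>"
      using Y_ae_meas[OF st w2m \<phi>] by blast
    have "ext_expectation M Y1 \<le> ext_expectation M Y2 + ereal (integral\<^sup>L M h)"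
    proof (rule ext_exp_compare[OF Y1 Y2 _ _ h0 hi])
      have yd: "Yf w1 \<phi> \<tau> \<omega> \<le> Yf w2 \<phi> \<tau> \<omega> + h \<omega>" if "good \<omega>" for \<omega>
        unfolding h_def by (rule Y_diff[where ?w1.0=w1 and ?w2.0=w2]) (use that \<phi> d0 in \<open>auto intro: le\<close>)
      show "AE x in M. Y1 x \<le> Y2 x + h x"
        using ae1 ae2 AE_good by eventually_elim (metis yd)
      have lb1: "AE \<omega> in M. - (1 / c) \<le> Yf w1 \<phi> \<tau> \<omega>" by (rule Y_lb[OF st]) (use w1l \<phi> in auto)
      have lb2: "AE \<omega> in M. - (1 / c) \<le> Yf w2 \<phi> \<tau> \<omega>" by (rule Y_lb[OF st]) (use w2l \<phi> in auto)
      show "AE x in M. - (1 / c) \<le> Y1 x" using ae1 lb1 by eventually_elim simp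
      show "AE x in M. - (1 / c) \<le> Y2 x" using ae2 lb2 by eventually_elim simp
    qed (use c in auto)
    then have "ext_expectation M (Yf w1 \<phi> \<tau>) \<le> ext_expectation M (Yf w2 \<phi> \<tau>) + ereal (\<delta> * q)"
      using ext_exp_cong[OF ae1] ext_exp_cong[OF ae2] hI by simp
    moreover have "Ie w1 \<phi> \<le> ext_expectation M (Yf w1 \<phi> \<tau>)"
      unfolding Ie_def by (rule INF_lower) (simp add: st)
    ultimately have "Ie w1 \<phi> \<le> ext_expectation M (Yf w2 \<phi> \<tau>) + ereal (\<delta> * q)" by (rule order_trans[rotated])
    then show ?thesis by (simp add: ereal_shift)
  qed
  have "Ie w1 \<phi> - ereal (\<delta> * q) \<le> Ie w2 \<phi>" unfolding Ie_def[of w2]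
    by (rule INF_greatest) (simp add: each)
  then have "Ie w1 \<phi> \<le> Ie w2 \<phi> + ereal (\<delta> * q)" by (simp add: ereal_shift)
  moreover have "Ie w1 \<phi> = ereal (real_of_ereal (Ie w1 \<phi>))" by (rule ereal_bounds(1)[OF Ie_bounds[OF W1 \<phi>]])
  moreover have "Ie w2 \<phi> = ereal (real_of_ereal (Ie w2 \<phi>))" by (rule ereal_bounds(1)[OF Ie_bounds[OF W2 \<phi>]])
  ultimately have "real_of_ereal (Ie w1 \<phi>) \<le> real_of_ereal (Ie w2 \<phi>) + \<delta> * q"
    by (metis ereal_less_eq(3) plus_ereal.simps(1))
  then show ?thesis unfolding Jop_Ie q_def by (simp add: mult.commute)
qed

lemma main:
  fixes v :: "nat \<Rightarrow> real \<Rightarrow> real" and v_inf :: "real \<Rightarrow> real"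
  assumes v: "v = (\<lambda>n. (Jop M lam \<mu> l0 l1 c f X T Z ^^ n) (\<lambda>_. 0))"
    and vi: "v_inf = (\<lambda>\<phi>. lim (\<lambda>n. v n \<phi>))"
  shows "(\<forall>n \<phi>. 0 \<le> \<phi> \<longrightarrow>
            v_inf \<phi> \<le> v n \<phi> \<and> v n \<phi> \<le> v_inf \<phi> + 1 / c * (l0 / (lam + l0)) ^ n)
         \<and> uniform_limit {0..} v v_inf sequentially"
proof -
  define J where "J = Jop M lam \<mu> l0 l1 c f X T Z"
  define q where "q = l0 / (lam + l0)"
  have q0: "0 \<le> q" "q < 1" unfolding q_def using lam l0 by auto
  have vS: "v (Suc n) = J (v n)" for n unfolding v J_def by simp
  have v0: "v 0 = (\<lambda>_. 0)" unfolding v by simp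
  have W: "Wc (v n)" for n
  proof (induction n)
    case 0
    show ?case unfolding v0 Wc_def using c by (auto intro: mono_onI)
  next
    case (Suc n)
    then show ?case unfolding vS J_def by (rule J_W)
  qed
  have vlb: "0 \<le> \<phi> \<Longrightarrow> - (1 / c) \<le> v n \<phi>" for n \<phi> using W[of n] by (simp add: Wc_def)
  have dec: "\<forall>\<phi>. 0 \<le> \<phi> \<longrightarrow> v (Suc n) \<phi> \<le> v n \<phi>" for n
  proof (induction n)
    case 0
    show ?case using W[of 1] unfolding v0 by (simp add: Wc_def)
  next
    case (Suc n)
    show ?case
    proof (intro allI impI)
      fix \<phi> :: real assume \<phi>: "0 \<le> \<phi>"
      have "J (v (Suc n)) \<phi> \<le> J (v n) \<phi> + q * 0"
        unfolding J_def q_def by (rule J_contr[OF W W _ \<phi>]) (use Suc in auto)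
      then show "v (Suc (Suc n)) \<phi> \<le> v (Suc n) \<phi>" unfolding vS by simp
    qed
  qed
  have gap: "\<forall>m \<phi>. 0 \<le> \<phi> \<longrightarrow> v n \<phi> \<le> v (n + m) \<phi> + 1 / c * q ^ n" for n
  proof (induction n)
    case 0
    show ?case
    proof (intro allI impI)
      fix m and \<phi> :: real assume "0 \<le> \<phi>"
      then have "- (1 / c) \<le> v m \<phi>" by (rule vlb)
      then show "v 0 \<phi> \<le> v (0 + m) \<phi> + 1 / c * q ^ 0" unfolding v0 by simp
    qed
  next
    case (Suc n)
    show ?case
    proof (intro allI impI)
      fix m and \<phi> :: real assume \<phi>: "0 \<le> \<phi>"
      have "J (v n) \<phi> \<le> J (v (n + m)) \<phi> + q * (1 / c * q ^ n)"
        unfolding J_def q_def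
        by (rule J_contr[OF W W _ \<phi>]) (use Suc c q0 in \<open>auto simp: q_def\<close>)
      moreover have "v (Suc n + m) = J (v (n + m))" using vS[of "n + m"] by simp
      ultimately show "v (Suc n) \<phi> \<le> v (Suc n + m) \<phi> + 1 / c * q ^ Suc n"
        unfolding vS by (simp add: algebra_simps)
    qed
  qed
  have conv: "(\<lambda>n. v n \<phi>) \<longlonglongrightarrow> v_inf \<phi>" and below: "\<forall>n. v_inf \<phi> \<le> v n \<phi>" if \<phi>: "0 \<le> \<phi>" for \<phi>
  proof -
    have "decseq (\<lambda>n. v n \<phi>)" using dec \<phi> by (intro decseq_SucI) auto
    then obtain L where L: "(\<lambda>n. v n \<phi>) \<longlonglongrightarrow> L" "\<forall>i. L \<le> v i \<phi>"
      using decseq_convergent[of "\<lambda>n. v n \<phi>" "- (1 / c)"] vlb[OF \<phi>] by blast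
    have "v_inf \<phi> = L" unfolding vi using L(1) by (simp add: limI)
    then show "(\<lambda>n. v n \<phi>) \<longlonglongrightarrow> v_inf \<phi>" "\<forall>n. v_inf \<phi> \<le> v n \<phi>" using L by auto
  qed
  have upper: "v n \<phi> \<le> v_inf \<phi> + 1 / c * q ^ n" if \<phi>: "0 \<le> \<phi>" for n \<phi>
  proof -
    have "(\<lambda>m. v (n + m) \<phi>) \<longlonglongrightarrow> v_inf \<phi>"
      using LIMSEQ_ignore_initial_segment[OF conv[OF \<phi>], of n] by (simp add: add.commute)
    then have "(\<lambda>m. v (n + m) \<phi> + 1 / c * q ^ n) \<longlonglongrightarrow> v_inf \<phi> + 1 / c * q ^ n"
      by (intro tendsto_add tendsto_const)
    then show ?thesis by (rule LIMSEQ_le_const) (use gap \<phi> in blast)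
  qed
  have unif: "uniform_limit {0..} v v_inf sequentially"
    unfolding uniform_limit_iff
  proof (intro allI impI)
    fix e :: real assume e: "0 < e"
    have "(\<lambda>n. 1 / c * q ^ n) \<longlonglongrightarrow> 1 / c * 0"
      by (intro tendsto_mult tendsto_const LIMSEQ_power_zero) (use q0 in auto)
    then have "\<forall>\<^sub>F n in sequentially. 1 / c * q ^ n < e" using e by (simp add: order_tendsto_iff)
    then show "\<forall>\<^sub>F n in sequentially. \<forall>x\<in>{0..}. dist (v n x) (v_inf x) < e"
    proof eventually_elim
      case (elim n)
      show ?case
      proof
        fix x :: real assume "x \<in> {0..}"
        then have x: "0 \<le> x" by simp
        have "dist (v n x) (v_inf x) = v n x - v_inf x" using below[OF x] by (simp add: dist_real_def)
        also have "\<dots> \<le> 1 / c * q ^ n" using upper[OF x, of n] by simp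
        finally show "dist (v n x) (v_inf x) < e" using elim by simp
      qed
    qed
  qed
  show ?thesis using below upper unif unfolding q_def by blast
qed

end

theorem lemma3p2:
  fixes M :: "'w measure" and \<nu>0 \<nu>1 :: "'e measure"
    and X :: "real \<Rightarrow> 'w \<Rightarrow> real" and T :: "nat \<Rightarrow> 'w \<Rightarrow> real" and Z :: "nat \<Rightarrow> 'w \<Rightarrow> 'e"
    and lam l0 l1 \<mu> c :: real and f :: "'e \<Rightarrow> real"
    and v :: "nat \<Rightarrow> real \<Rightarrow> real" and v_inf :: "real \<Rightarrow> real"
  assumes "lam > 0" and "l0 > 0" and "l1 > 0" and "\<mu> \<noteq> 0" and "c > 0"
    and "prob_space \<nu>0" and "prob_space \<nu>1" and "sets \<nu>1 = sets \<nu>0"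
    and "absolutely_continuous \<nu>0 \<nu>1"
    and "f = (\<lambda>x. enn2real (RN_deriv \<nu>0 \<nu>1 x))"
    and "prob_space M"
    and "wiener_process M X"
    and "marked_poisson M l0 \<nu>0 T Z"
    and "indep_rv M
           (PiM {0..} (\<lambda>_. borel)) (\<lambda>\<omega>. restrict (\<lambda>t. X t \<omega>) {0..})
           (PiM {1..} (\<lambda>_. borel \<Otimes>\<^sub>M \<nu>0)) (\<lambda>\<omega>. restrict (\<lambda>n. (T n \<omega>, Z n \<omega>)) {1..})"
    and "v = (\<lambda>n. (Jop M lam \<mu> l0 l1 c f X T Z ^^ n) (\<lambda>_. 0))"
    and "v_inf = (\<lambda>\<phi>. lim (\<lambda>n. v n \<phi>))"
  shows "(\<forall>n \<phi>. 0 \<le> \<phi> \<longrightarrow>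
            v_inf \<phi> \<le> v n \<phi> \<and> v n \<phi> \<le> v_inf \<phi> + 1 / c * (l0 / (lam + l0)) ^ n)
         \<and> uniform_limit {0..} v v_inf sequentially"
  proof -
  interpret LS M \<nu>0 X T Z lam l0 l1 \<mu> c f
  proof
    show "\<And>x. 0 \<le> f x" using assms(10) by simp
    show "f \<in> borel_measurable \<nu>0" using assms(10) by simp
  qed (use assms in auto)
  show ?thesis by (rule main[OF assms(15,16)])
qed

end
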